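(* Let $X$, $Z$ be topological vector spaces, $C\subseteq Z$ a nonempty closed convex cone with $C^-\neq\{0\}$, and $f:X\to\mathcal{F}(Z,C)$ convex. If $f$ is lower continuous at $x_0\in{\rm dom\,} f$, then $f$ is lower lattice-semicontinuous at $x_0$.
   Context: $\mathcal{F}(Z,C)=\{A\subseteq Z\colon A=\operatorname{cl}(A+C)\}$ (empty set included); $C^-=\{z^*\in Z^*\colon z^*(z)\le0\ \forall z\in C\}$; ${\rm dom\,} f=\{x\colon f(x)\neq\emptyset\}$. $f$ is convex iff $tf(x_1)+(1-t)f(x_2)\subseteq f(tx_1+(1-t)x_2)$ for all $x_1,x_2$, $t\in(0,1)$. $f$ is lower continuous at $x_0$ iff for every $z_0\in f(x_0)$ and every neighborhood $V$ of $z_0$ there is a neighborhood $U$ of $x_0$ with $f(x)\cap V\neq\emptyset$ for all $x\in U$. $f$ is lower lattice-semicontinuous at $x_0$ iff $f(x_0)\supseteq\bigcap_{U\in\mathcal{N}(x_0)}\operatorname{cl}\bigcup_{x\in U}f(x)$ ($\mathcal{N}(x_0)$ the neighborhoods of $x_0$); equivalently, for every $z_0\notin f(x_0)$ there exist a neighborhood $U$ of $x_0$ and a neighborhood $V$ of $z_0$ with $z\notin f(x)$ for all $x\in U$, $z\in V$. *)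

theory Defs
  imports "HOL-Analysis.Analysis"
begin

text \<open>Real topological vector spaces: a real vector space with a topology making
  addition and scalar multiplication jointly continuous (no separation axiom);
  joint continuity of scalar multiplication is spelled out with open sets.\<close>
class topological_real_vector = real_vector + topological_ab_group_add +
  assumes continuous_scaleR_joint:
    "\<And>(a::real) (x::'a) W. open W \<Longrightarrow> a *\<^sub>R x \<in> W \<Longrightarrow>
       \<exists>A V. open A \<and> a \<in> A \<and> open V \<and> x \<in> V \<and>
             (\<forall>b\<in>A. \<forall>y\<in>V. b *\<^sub>R y \<in> W)"

definition nbhds :: "'a::topological_space \<Rightarrow> 'a set set" where
  "nbhds x = {U. \<exists>V. open V \<and> x \<in> V \<and> V \<subseteq> U}"

definition msum :: "'a::ab_group_add set \<Rightarrow> 'a set \<Rightarrow> 'a set" where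
  "msum A B = {a + b | a b. a \<in> A \<and> b \<in> B}"

text \<open>The family F(Z,C) of closed C-upper sets (empty set included).\<close>
definition upper_closed_sets :: "'a::topological_real_vector set \<Rightarrow> 'a set set" where
  "upper_closed_sets C = {A. A = closure (msum A C)}"

definition top_dual :: "('a::topological_real_vector \<Rightarrow> real) set" where
  "top_dual = {l. linear l \<and> continuous_on UNIV l}"

definition neg_dual_cone :: "'a::topological_real_vector set \<Rightarrow> ('a \<Rightarrow> real) set" where
  "neg_dual_cone C = {l \<in> top_dual. \<forall>z\<in>C. l z \<le> 0}"

definition sv_dom :: "('a \<Rightarrow> 'b set) \<Rightarrow> 'a set" where
  "sv_dom f = {x. f x \<noteq> {}}"

definition sv_convex :: "('a::real_vector \<Rightarrow> 'b::real_vector set) \<Rightarrow> bool" where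
  "sv_convex f \<longleftrightarrow> (\<forall>x1 x2 t. 0 < t \<and> t < 1 \<longrightarrow>
      msum ((\<lambda>z. t *\<^sub>R z) ` f x1) ((\<lambda>z. (1 - t) *\<^sub>R z) ` f x2)
        \<subseteq> f (t *\<^sub>R x1 + (1 - t) *\<^sub>R x2))"

definition lower_continuous_at ::
  "('a::topological_space \<Rightarrow> 'b::topological_space set) \<Rightarrow> 'a \<Rightarrow> bool" where
  "lower_continuous_at f x0 \<longleftrightarrow>
     (\<forall>z0\<in>f x0. \<forall>V\<in>nbhds z0. \<exists>U\<in>nbhds x0. \<forall>x\<in>U. f x \<inter> V \<noteq> {})"

definition lower_lattice_semicontinuous_at ::
  "('a::topological_space \<Rightarrow> 'b::topological_space set) \<Rightarrow> 'a \<Rightarrow> bool" where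
  "lower_lattice_semicontinuous_at f x0 \<longleftrightarrow>
     (\<Inter>U\<in>nbhds x0. closure (\<Union>x\<in>U. f x)) \<subseteq> f x0"

end

theory Submission
  imports Defs
begin

lemma open_shift:
  fixes W :: "'a::topological_ab_group_add set"
  assumes "open W" shows "open ((\<lambda>y. y + c) -` W)"
proof -
  have "continuous_on UNIV (\<lambda>y::'a. y + c)" by (intro continuous_intros)
  then show ?thesis using assms by (simp add: continuous_on_open_vimage)
qed

lemma add_nbhds:
  fixes W :: "'a::topological_ab_group_add set"
  assumes "open W" "a + b \<in> W"
  shows "\<exists>P Q. open P \<and> a \<in> P \<and> open Q \<and> b \<in> Q \<and> (\<forall>p\<in>P. \<forall>q\<in>Q. p + q \<in> W)"
proof -
  have "eventually (\<lambda>y. y \<in> W) (nhds (a + b))"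
    using assms eventually_nhds by blast
  then have "eventually (\<lambda>x. fst x + snd x \<in> W) (nhds a \<times>\<^sub>F nhds b)"
    using tendsto_add_Pair[of a b] by (auto simp: filterlim_def eventually_filtermap le_filter_def)
  then obtain Pf Pg where "eventually Pf (nhds a)" "eventually Pg (nhds b)"
      "\<forall>x y. Pf x \<longrightarrow> Pg y \<longrightarrow> x + y \<in> W"
    by (auto simp: eventually_prod_filter)
  then show ?thesis unfolding eventually_nhds by metis
qed

lemma scale_nbhd:
  fixes P :: "'a::topological_real_vector set" assumes "open P" "t *\<^sub>R z0 \<in> P"
  shows "\<exists>V. open V \<and> z0 \<in> V \<and> (\<forall>y\<in>V. t *\<^sub>R y \<in> P)"
proof -
  obtain A V where "open A" "t \<in> A" "open V" "z0 \<in> V" "\<forall>b\<in>A. \<forall>y\<in>V. b *\<^sub>R y \<in> P"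
    using continuous_scaleR_joint[OF assms] by blast
  then show ?thesis by blast
qed

theorem mainTheorem8:
  fixes f :: "'x::topological_real_vector \<Rightarrow> 'z::topological_real_vector set"
    and C :: "'z set" and x0 :: 'x
  assumes "convex_cone C" and "closed C"
    and "neg_dual_cone C \<noteq> {(\<lambda>_. 0)}"
    and "\<forall>x. f x \<in> upper_closed_sets C"
    and "sv_convex f"
    and "x0 \<in> sv_dom f"
    and "lower_continuous_at f x0"
  shows "lower_lattice_semicontinuous_at f x0"
  unfolding lower_lattice_semicontinuous_at_def
proof
  fix z0 assume z0: "z0 \<in> (\<Inter>U\<in>nbhds x0. closure (\<Union>x\<in>U. f x))"
  show "z0 \<in> f x0"
  proof (rule ccontr)
    assume nz: "z0 \<notin> f x0"
    have e: "f x0 = closure (msum (f x0) C)" using assms(4) unfolding upper_closed_sets_def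
      by blast
    have "closed (f x0)" by (rule ssubst[OF e, where P=closed]) (rule closed_closure)
    define W where "W = - f x0"
    have oW: "open W" "z0 \<in> W" using \<open>closed (f x0)\<close> nz by (auto simp: W_def)
    obtain z1 where z1: "z1 \<in> f x0" using assms(6) by (auto simp: sv_dom_def)
    have o1: "open ((\<lambda>y. y + z1) -` W)" using open_shift oW by blast
    have m1: "1 *\<^sub>R (z0 - z1) \<in> (\<lambda>y. y + z1) -` W" using oW by simp
    obtain A V0 where A: "open A" "(1::real) \<in> A" "open V0" "z0 - z1 \<in> V0"
        "\<forall>b\<in>A. \<forall>y\<in>V0. b *\<^sub>R y \<in> (\<lambda>y. y + z1) -` W"
      using continuous_scaleR_joint[OF o1 m1] by blast
    obtain e where e: "e > 0" "\<forall>s. dist s 1 < e \<longrightarrow> s \<in> A"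
      using A(1,2) open_dist by metis
    define t where "t = max (1/2) (1 - e/2)"
    have t: "0 < t" "t < 1" "t \<in> A" using e by (auto simp: t_def dist_real_def)
    have "t *\<^sub>R (z0 - z1) + z1 \<in> W" using A(4,5) t(3) by auto
    moreover have "t *\<^sub>R (z0 - z1) + z1 = t *\<^sub>R z0 + (1 - t) *\<^sub>R z1"
      by (simp add: scaleR_diff_right scaleR_diff_left)
    ultimately have wt: "t *\<^sub>R z0 + (1 - t) *\<^sub>R z1 \<in> W" by simp
    obtain P Q where PQ: "open P" "t *\<^sub>R z0 \<in> P" "open Q" "(1 - t) *\<^sub>R z1 \<in> Q"
      "\<forall>p\<in>P. \<forall>q\<in>Q. p + q \<in> W"
      using add_nbhds[OF oW(1) wt] by blast
    obtain V where V: "open V" "z0 \<in> V" "\<forall>y\<in>V. t *\<^sub>R y \<in> P"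
      using scale_nbhd[OF PQ(1,2)] by blast
    obtain V1 where V1: "open V1" "z1 \<in> V1" "\<forall>y\<in>V1. (1 - t) *\<^sub>R y \<in> Q"
      using scale_nbhd[OF PQ(3,4)] by blast
    have "V1 \<in> nbhds z1" using V1 by (auto simp: nbhds_def)
    then obtain U1 where U1: "U1 \<in> nbhds x0" "\<forall>x\<in>U1. f x \<inter> V1 \<noteq> {}"
      using assms(7) z1 unfolding lower_continuous_at_def by blast
    then obtain U1' where U1': "open U1'" "x0 \<in> U1'" "U1' \<subseteq> U1"
      by (auto simp: nbhds_def)
    define c where "c = (1 / (1 - t)) *\<^sub>R x0"
    define k where "k = - t / (1 - t)"
    have o2: "open ((\<lambda>y. y + c) -` U1')" using open_shift U1' by blast
    have m2: "k *\<^sub>R x0 \<in> (\<lambda>y. y + c) -` U1'"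
    proof -
      have "k *\<^sub>R x0 + c = (k + 1 / (1 - t)) *\<^sub>R x0" by (simp add: c_def scaleR_add_left)
      also have "k + 1 / (1 - t) = 1" using t by (simp add: k_def field_simps)
      finally show ?thesis using U1' by simp
    qed
    obtain U where U: "open U" "x0 \<in> U" "\<forall>y\<in>U. k *\<^sub>R y + c \<in> U1'"
      using scale_nbhd[OF o2 m2] by auto
    have "U \<in> nbhds x0" using U by (auto simp: nbhds_def)
    then have z0c: "z0 \<in> closure (\<Union>x\<in>U. f x)" using z0 by blast
    have disj: "(\<Union>x\<in>U. f x) \<subseteq> - V"
    proof
      fix z assume "z \<in> (\<Union>x\<in>U. f x)"
      then obtain x where x: "x \<in> U" "z \<in> f x" by blast
      show "z \<in> - V"
      proof
        assume zV: "z \<in> V"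
        define x2 where "x2 = k *\<^sub>R x + c"
        have "x2 \<in> U1" using U x U1' by (auto simp: x2_def)
        then obtain z2 where z2: "z2 \<in> f x2" "z2 \<in> V1" using U1 by blast
        have "t *\<^sub>R x + (1 - t) *\<^sub>R x2 = x0"
        proof -
          have h1: "(1 - t) * k = - t" using t by (simp add: k_def)
          have h2: "(1 - t) * (1 / (1 - t)) = 1" using t by simp
          have h3: "t *\<^sub>R x + (1 - t) *\<^sub>R x2
             = t *\<^sub>R x + ((1 - t) * k) *\<^sub>R x + ((1 - t) * (1 / (1 - t))) *\<^sub>R x0"
            unfolding x2_def c_def by (simp only: scaleR_add_right scaleR_scaleR add.assoc)
          show ?thesis using h3 unfolding h1 h2 by simp
        qed
        moreover have "t *\<^sub>R z + (1 - t) *\<^sub>R z2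
            \<in> msum ((\<lambda>z. t *\<^sub>R z) ` f x) ((\<lambda>z. (1 - t) *\<^sub>R z) ` f x2)"
          using x z2 by (auto simp: msum_def)
        ultimately have "t *\<^sub>R z + (1 - t) *\<^sub>R z2 \<in> f x0"
          using assms(5) t unfolding sv_convex_def by blast
        moreover have "t *\<^sub>R z + (1 - t) *\<^sub>R z2 \<in> W" using PQ(5) V(3) V1(3) zV z2 by blast
        ultimately show False by (simp add: W_def)
      qed
    qed
    have "closure (\<Union>x\<in>U. f x) \<subseteq> - V"
      using closure_minimal[OF disj] V(1) by (simp add: closed_Compl)
    then show False using z0c V(2) by blast
  qed
qed

end
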